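(* Let $I$ be a partially ordered set and let $E$ be a locally convex space which admits an $I$-decreasing base of neighbourhoods of zero. Then $E$ has an $\mathbb{N}^I$-increasing family of bounded sets covering $E$ which swallows all bounded subsets of $E$. Consequently, the strong dual $E'_\beta$ of $E$ has an $\mathbb{N}^I$-decreasing base of neighbourhoods of zero.
   Context: All locally convex spaces are Hausdorff. For a partially ordered set $I$, a family $\{A_i\}_{i\in I}$ of sets is $I$-increasing (resp. $I$-decreasing) if $A_i\subseteq A_j$ (resp. $A_i\supseteq A_j$) whenever $i\le j$. The set $\mathbb{N}^I$ is ordered pointwise: $\alpha\le\beta$ iff $\alpha(i)\le\beta(i)$ for all $i\in I$. A family $\{A_j\}$ swallows a family $\mathcal{B}$ if every $B\in\mathcal{B}$ is contained in some $A_j$. $E'_\beta=(E',\beta(E',E))$ is the topological dual with the topology of uniform convergence on bounded subsets of $E$. *)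

theory Defs
  imports "HOL-Analysis.Analysis"
begin

definition lcs :: "'a::real_vector topology \<Rightarrow> bool" where
  "lcs T \<longleftrightarrow> topspace T = UNIV \<and> Hausdorff_space T
     \<and> continuous_map (prod_topology T T) T (\<lambda>(x, y). x + y)
     \<and> continuous_map (prod_topology euclideanreal T) T (\<lambda>(c, x). c *\<^sub>R x)
     \<and> (\<forall>W. openin T W \<and> 0 \<in> W \<longrightarrow> (\<exists>U. openin T U \<and> 0 \<in> U \<and> convex U \<and> U \<subseteq> W))"

definition nhd0 :: "'a::real_vector topology \<Rightarrow> 'a set \<Rightarrow> bool" where
  "nhd0 T U \<longleftrightarrow> (\<exists>W. openin T W \<and> 0 \<in> W \<and> W \<subseteq> U)"

definition tvs_bounded :: "'a::real_vector topology \<Rightarrow> 'a set \<Rightarrow> bool" where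
  "tvs_bounded T B \<longleftrightarrow>
     (\<forall>U. nhd0 T U \<longrightarrow> (\<exists>s>0. \<forall>t. t \<ge> s \<longrightarrow> B \<subseteq> (\<lambda>x. t *\<^sub>R x) ` U))"

definition tvs_dual :: "'a::real_vector topology \<Rightarrow> ('a \<Rightarrow> real) set" where
  "tvs_dual T = {f. linear f \<and> continuous_map T euclideanreal f}"

text \<open>Neighbourhoods of zero of the strong dual E'_beta, i.e. of the topology of
uniform convergence on bounded subsets of E.\<close>
definition strong_nhd0 :: "'a::real_vector topology \<Rightarrow> ('a \<Rightarrow> real) set \<Rightarrow> bool" where
  "strong_nhd0 T V \<longleftrightarrow> V \<subseteq> tvs_dual T \<and>
     (\<exists>B \<epsilon>. tvs_bounded T B \<and> \<epsilon> > 0 \<and> {f \<in> tvs_dual T. \<forall>x\<in>B. \<bar>f x\<bar> \<le> \<epsilon>} \<subseteq> V)"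

definition nhd_base :: "('b set \<Rightarrow> bool) \<Rightarrow> ('j \<Rightarrow> 'b set) \<Rightarrow> bool" where
  "nhd_base N U \<longleftrightarrow> (\<forall>j. N (U j)) \<and> (\<forall>W. N W \<longrightarrow> (\<exists>j. U j \<subseteq> W))"

text \<open>I-decreasing / I-increasing families (I any ordered index type; for
functions into nat the order is the pointwise one).\<close>
definition decreasing_family :: "('j::order \<Rightarrow> 'b set) \<Rightarrow> bool" where
  "decreasing_family U \<longleftrightarrow> (\<forall>i j. i \<le> j \<longrightarrow> U j \<subseteq> U i)"

definition increasing_family :: "('j::order \<Rightarrow> 'b set) \<Rightarrow> bool" where
  "increasing_family U \<longleftrightarrow> (\<forall>i j. i \<le> j \<longrightarrow> U i \<subseteq> U j)"

end

theory Submission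
  imports Defs
begin

lemma lcs_smult_nhd:
  fixes T :: "'a::real_vector topology"
  assumes "lcs T" "openin T W" "0 \<in> W"
  shows "\<exists>d>0. \<exists>V. openin T V \<and> 0 \<in> V \<and> (\<forall>c v. \<bar>c\<bar> < d \<longrightarrow> v \<in> V \<longrightarrow> c *\<^sub>R v \<in> W)"
proof -
  have top: "topspace T = UNIV" and cm: "continuous_map (prod_topology euclideanreal T) T (\<lambda>(c, x). c *\<^sub>R x)"
    using assms(1) unfolding lcs_def by auto
  define P where "P = {z \<in> topspace (prod_topology euclideanreal T). (\<lambda>(c, x). c *\<^sub>R x) z \<in> W}"
  have "openin (prod_topology euclideanreal T) P"
    unfolding P_def by (rule openin_continuous_map_preimage[OF cm assms(2)])
  moreover have "(0::real, 0::'a) \<in> P"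
    using assms(3) top by (simp add: P_def)
  ultimately obtain S V where SV: "openin euclideanreal S" "openin T V" "0 \<in> S" "0 \<in> V"
    "S \<times> V \<subseteq> P"
    unfolding openin_prod_topology_alt by metis
  obtain d where d: "d > 0" "ball 0 d \<subseteq> S" using SV(1,3) by (meson open_contains_ball_eq open_openin)
  have "\<forall>c v. \<bar>c\<bar> < d \<longrightarrow> v \<in> V \<longrightarrow> c *\<^sub>R v \<in> W"
  proof (intro allI impI)
    fix c v assume "\<bar>c\<bar> < d" "v \<in> V"
    then have "(c, v) \<in> S \<times> V" using d by (auto simp: dist_real_def)
    then show "c *\<^sub>R v \<in> W" using SV(5) by (auto simp: P_def)
  qed
  then show ?thesis using d SV by blast
qed
lemma lcs_absorb:
  fixes T :: "'a::real_vector topology"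
  assumes "lcs T" "nhd0 T U"
  shows "\<exists>n::nat. x \<in> (\<lambda>y. real n *\<^sub>R y) ` U"
proof -
  have top: "topspace T = UNIV" and cm: "continuous_map (prod_topology euclideanreal T) T (\<lambda>(c, x). c *\<^sub>R x)"
    using assms(1) unfolding lcs_def by auto
  obtain W where W: "openin T W" "0 \<in> W" "W \<subseteq> U" using assms(2) unfolding nhd0_def by blast
  have c2: "continuous_map euclideanreal T (\<lambda>c. c *\<^sub>R x)"
  proof -
    have "continuous_map euclideanreal (prod_topology euclideanreal T) (\<lambda>c. (c, x))"
      by (intro continuous_map_pairedI) (auto simp: top)
    from continuous_map_compose[OF this cm] show ?thesis by (simp add: o_def)
  qed
  have "openin euclideanreal {c \<in> topspace euclideanreal. c *\<^sub>R x \<in> W}"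
    using openin_continuous_map_preimage[OF c2 W(1)] .
  then have op: "open {c. c *\<^sub>R x \<in> W}" by simp
  have "(0::real) \<in> {c. c *\<^sub>R x \<in> W}" using W by simp
  then obtain d where d: "d > 0" "ball 0 d \<subseteq> {c. c *\<^sub>R x \<in> W}" using op by (meson open_contains_ball_eq)
  obtain n::nat where n: "inverse (real (Suc n)) < d" using reals_Archimedean d(1) by blast
  have "inverse (real (Suc n)) \<in> ball 0 d" using n by (simp add: dist_real_def)
  then have "inverse (real (Suc n)) *\<^sub>R x \<in> W" using d(2) by blast
  then have "inverse (real (Suc n)) *\<^sub>R x \<in> U" using W by auto
  moreover have "x = real (Suc n) *\<^sub>R (inverse (real (Suc n)) *\<^sub>R x)" by simp
  ultimately show ?thesis by blast
qed

theorem proposition2p1: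
  fixes T :: "'a::real_vector topology" and U :: "'i::order \<Rightarrow> 'a set"
  assumes "lcs T"
    and "nhd_base (nhd0 T) U" and "decreasing_family U"
  shows "(\<exists>B :: ('i \<Rightarrow> nat) \<Rightarrow> 'a set.
            (\<forall>\<alpha>. tvs_bounded T (B \<alpha>)) \<and> increasing_family B \<and> (\<Union>\<alpha>. B \<alpha>) = UNIV
            \<and> (\<forall>A. tvs_bounded T A \<longrightarrow> (\<exists>\<alpha>. A \<subseteq> B \<alpha>)))
       \<and> (\<exists>V :: ('i \<Rightarrow> nat) \<Rightarrow> ('a \<Rightarrow> real) set.
            nhd_base (strong_nhd0 T) V \<and> decreasing_family V)"
proof -
  have Unhd: "\<And>i. nhd0 T (U i)" and Ubase: "\<And>W. nhd0 T W \<Longrightarrow> \<exists>j. U j \<subseteq> W"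
    using assms(2) unfolding nhd_base_def by auto
  define B :: "('i \<Rightarrow> nat) \<Rightarrow> 'a set" where
    "B \<alpha> = {x. \<forall>i. \<exists>t. 0 \<le> t \<and> t \<le> real (\<alpha> i) \<and> x \<in> (\<lambda>y. t *\<^sub>R y) ` U i}" for \<alpha>
  have bnd: "tvs_bounded T (B \<alpha>)" for \<alpha>
    unfolding tvs_bounded_def
  proof (intro allI impI)
    fix W assume "nhd0 T W"
    then obtain W' where W': "openin T W'" "0 \<in> W'" "W' \<subseteq> W" unfolding nhd0_def by blast
    obtain d V where dV: "d > 0" "openin T V" "0 \<in> V" "\<And>c v. \<bar>c\<bar> < d \<Longrightarrow> v \<in> V \<Longrightarrow> c *\<^sub>R v \<in> W'"
      using lcs_smult_nhd[OF assms(1) W'(1,2)] by blast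
    have "nhd0 T V" using dV unfolding nhd0_def by blast
    then obtain j where j: "U j \<subseteq> V" using Ubase by blast
    define s where "s = real (\<alpha> j) / d + 1"
    have s0: "s > 0" using dV(1) by (simp add: s_def add_nonneg_pos)
    have "B \<alpha> \<subseteq> (\<lambda>x. t *\<^sub>R x) ` W" if ts: "t \<ge> s" for t
    proof
      fix x assume "x \<in> B \<alpha>"
      then obtain c u where cu: "0 \<le> c" "c \<le> real (\<alpha> j)" "u \<in> U j" "x = c *\<^sub>R u"
        unfolding B_def by blast
      have t0: "t > 0" using ts s0 by linarith
      have "real (\<alpha> j) / d < t" using ts by (simp add: s_def)
      then have "real (\<alpha> j) < t * d" using dV(1) by (simp add: divide_less_eq)
      then have "c < t * d" using cu by linarith
      then have "c / t < d" using t0 by (simp add: divide_less_eq mult.commute)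
      then have "\<bar>c / t\<bar> < d" using cu t0 by simp
      then have "(c / t) *\<^sub>R u \<in> W" using dV(4) j cu(3) W'(3) by blast
      moreover have "x = t *\<^sub>R ((c / t) *\<^sub>R u)" using t0 cu by simp
      ultimately show "x \<in> (\<lambda>x. t *\<^sub>R x) ` W" by blast
    qed
    then show "\<exists>s>0. \<forall>t. t \<ge> s \<longrightarrow> B \<alpha> \<subseteq> (\<lambda>x. t *\<^sub>R x) ` W" using s0 by blast
  qed
  have inc: "increasing_family B"
    unfolding increasing_family_def
  proof (intro allI impI subsetI)
    fix \<alpha> \<beta> :: "'i \<Rightarrow> nat" and x assume le: "\<alpha> \<le> \<beta>" and x: "x \<in> B \<alpha>"
    have "\<exists>t. 0 \<le> t \<and> t \<le> real (\<beta> i) \<and> x \<in> (\<lambda>y. t *\<^sub>R y) ` U i" for i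
    proof -
      obtain t where t: "0 \<le> t" "t \<le> real (\<alpha> i)" "x \<in> (\<lambda>y. t *\<^sub>R y) ` U i"
        using x unfolding B_def by blast
      have "real (\<alpha> i) \<le> real (\<beta> i)" using le by (simp add: le_fun_def)
      then show ?thesis using t by (intro exI[of _ t]) auto
    qed
    then show "x \<in> B \<beta>" unfolding B_def by blast
  qed
  have cov: "(\<Union>\<alpha>. B \<alpha>) = UNIV"
  proof -
    have "x \<in> B (\<lambda>i. SOME n. x \<in> (\<lambda>y. real n *\<^sub>R y) ` U i)" for x
    proof -
      have "x \<in> (\<lambda>y. real (SOME n. x \<in> (\<lambda>y. real n *\<^sub>R y) ` U i) *\<^sub>R y) ` U i" for i
        using someI_ex[OF lcs_absorb[OF assms(1) Unhd, of x i]] .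
      then show ?thesis unfolding B_def by (intro CollectI allI, rule_tac x="real (SOME n. x \<in> (\<lambda>y. real n *\<^sub>R y) ` U i)" in exI) auto
    qed
    then show ?thesis by blast
  qed
  have swallow: "\<exists>\<alpha>. A \<subseteq> B \<alpha>" if A: "tvs_bounded T A" for A
  proof -
    have "\<exists>s>0. \<forall>t. t \<ge> s \<longrightarrow> A \<subseteq> (\<lambda>x. t *\<^sub>R x) ` U i" for i
      using A Unhd unfolding tvs_bounded_def by blast
    then obtain s where s: "\<And>i. \<forall>t. t \<ge> s i \<longrightarrow> A \<subseteq> (\<lambda>x. t *\<^sub>R x) ` U i" by metis
    define \<alpha> where "\<alpha> i = nat \<lceil>s i\<rceil>" for i
    have "A \<subseteq> B \<alpha>"
    proof
      fix x assume "x \<in> A"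
      have "\<exists>t. 0 \<le> t \<and> t \<le> real (\<alpha> i) \<and> x \<in> (\<lambda>y. t *\<^sub>R y) ` U i" for i
      proof -
        have "real (\<alpha> i) \<ge> s i" unfolding \<alpha>_def by linarith
        then have "x \<in> (\<lambda>y. real (\<alpha> i) *\<^sub>R y) ` U i" using s \<open>x \<in> A\<close> by blast
        then show ?thesis by (intro exI[of _ "real (\<alpha> i)"]) auto
      qed
      then show "x \<in> B \<alpha>" unfolding B_def by blast
    qed
    then show ?thesis by blast
  qed
  define V where "V \<alpha> = {f \<in> tvs_dual T. \<forall>x\<in>B \<alpha>. \<bar>f x\<bar> \<le> 1}" for \<alpha>
  have Vnhd: "strong_nhd0 T (V \<alpha>)" for \<alpha>
    unfolding strong_nhd0_def
  proof (intro conjI)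
    show "V \<alpha> \<subseteq> tvs_dual T" unfolding V_def by blast
    show "\<exists>B' \<epsilon>. tvs_bounded T B' \<and> \<epsilon> > 0 \<and> {f \<in> tvs_dual T. \<forall>x\<in>B'. \<bar>f x\<bar> \<le> \<epsilon>} \<subseteq> V \<alpha>"
      by (rule exI[of _ "B \<alpha>"], rule exI[of _ 1]) (simp add: bnd V_def)
  qed
  have Vbase: "\<exists>\<alpha>. V \<alpha> \<subseteq> W" if W: "strong_nhd0 T W" for W
  proof -
    obtain A e where Ae: "tvs_bounded T A" "e > 0" "{f \<in> tvs_dual T. \<forall>x\<in>A. \<bar>f x\<bar> \<le> e} \<subseteq> W"
      using W unfolding strong_nhd0_def by blast
    have "tvs_bounded T ((\<lambda>x. inverse e *\<^sub>R x) ` A)"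
      unfolding tvs_bounded_def
    proof (intro allI impI)
      fix N assume "nhd0 T N"
      then obtain s where s: "s > 0" "\<forall>t. t \<ge> s \<longrightarrow> A \<subseteq> (\<lambda>x. t *\<^sub>R x) ` N"
        using Ae(1) unfolding tvs_bounded_def by blast
      have "(\<lambda>x. inverse e *\<^sub>R x) ` A \<subseteq> (\<lambda>x. t *\<^sub>R x) ` N" if "t \<ge> s / e" for t
      proof
        fix y assume "y \<in> (\<lambda>x. inverse e *\<^sub>R x) ` A"
        then obtain x where x: "x \<in> A" "y = inverse e *\<^sub>R x" by blast
        have "t * e \<ge> s" using that Ae(2) by (simp add: divide_le_eq)
        then obtain n where n: "n \<in> N" "x = (t * e) *\<^sub>R n" using s x(1) by blast
        have "y = t *\<^sub>R n" using n x Ae(2) by simp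
        then show "y \<in> (\<lambda>x. t *\<^sub>R x) ` N" using n by blast
      qed
      then show "\<exists>s>0. \<forall>t. t \<ge> s \<longrightarrow> (\<lambda>x. inverse e *\<^sub>R x) ` A \<subseteq> (\<lambda>x. t *\<^sub>R x) ` N"
        using s(1) Ae(2) by (intro exI[of _ "s / e"]) auto
    qed
    then obtain \<alpha> where al: "(\<lambda>x. inverse e *\<^sub>R x) ` A \<subseteq> B \<alpha>" using swallow by blast
    have "V \<alpha> \<subseteq> W"
    proof
      fix f assume f: "f \<in> V \<alpha>"
      then have fd: "f \<in> tvs_dual T" and lin: "linear f" unfolding V_def tvs_dual_def by auto
      have "\<bar>f x\<bar> \<le> e" if "x \<in> A" for x
      proof -
        have "\<bar>f (inverse e *\<^sub>R x)\<bar> \<le> 1" using f al that unfolding V_def by blast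
        then have "\<bar>inverse e * f x\<bar> \<le> 1" using linear_scale[OF lin] by simp
        then show ?thesis using Ae(2) by (simp add: abs_mult field_simps)
      qed
      then show "f \<in> W" using Ae(3) fd by blast
    qed
    then show ?thesis by blast
  qed
  have Vdec: "decreasing_family V"
    unfolding decreasing_family_def
  proof (intro allI impI)
    fix \<alpha> \<beta> :: "'i \<Rightarrow> nat" assume "\<alpha> \<le> \<beta>"
    then have "B \<alpha> \<subseteq> B \<beta>" using inc unfolding increasing_family_def by blast
    then show "V \<beta> \<subseteq> V \<alpha>" unfolding V_def by blast
  qed
  show ?thesis
    proof (intro conjI)
    show "\<exists>B :: ('i \<Rightarrow> nat) \<Rightarrow> 'a set.
            (\<forall>\<alpha>. tvs_bounded T (B \<alpha>)) \<and> increasing_family B \<and> (\<Union>\<alpha>. B \<alpha>) = UNIV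
            \<and> (\<forall>A. tvs_bounded T A \<longrightarrow> (\<exists>\<alpha>. A \<subseteq> B \<alpha>))"
      using bnd inc cov swallow by (intro exI[of _ B]) simp
    have "nhd_base (strong_nhd0 T) V" unfolding nhd_base_def using Vnhd Vbase by simp
    then show "\<exists>V :: ('i \<Rightarrow> nat) \<Rightarrow> ('a \<Rightarrow> real) set.
            nhd_base (strong_nhd0 T) V \<and> decreasing_family V"
      using Vdec by blast
  qed
qed

end
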